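(* Let $a>0$, $\epsilon>0$ with $a\epsilon$ small (in particular $a\epsilon<1$). For $x_0^+$, $x_0^-$ let $v_\pm(x,x_0^\pm)$ denote the solution of $$\epsilon\dot v=-a\epsilon v-\sin(\pi\omega_\pm x),\qquad \omega_+=\tfrac32,\ \omega_-=\tfrac12,$$ with $v_\pm(x_0^\pm,x_0^\pm)=\pm1$, and let $\bar P^a_{\epsilon,\pm}(x_0^\pm)$ be the next $x>x_0^\pm$ at which $v_\pm(x,x_0^\pm)=\pm1$. Define, for $n\in\mathbb{N}$, $$x^\pm_{\epsilon,n}=x^\pm_n\pm(-1)^{n+1}\frac{1}{\pi\omega_\pm}\arcsin(a\epsilon),\qquad x_n^+=\tfrac{2n}{3},\ x_n^-=2n.$$ Then for all $n\in\mathbb{N}$, $$\bar P^a_{\epsilon,+}(x^+_{\epsilon,2n+1})\in\left(x^+_{\epsilon,2n+2},x^+_{\epsilon,2n+3}\right),\qquad \bar P^a_{\epsilon,-}(x^-_{\epsilon,2n})\in\left(x^-_{\epsilon,2n+1},x^-_{\epsilon,2n+2}\right).$$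
   Context: The points $x^\pm_{\epsilon,n}$ are the tangency (fold) points of the vector fields $\epsilon\dot v=-a\epsilon v-\sin(\pi\omega_\pm x)$ with the lines $v=\pm1$, i.e. solutions of $-a\epsilon(\pm1)-\sin(\pi\omega_\pm x)=0$ near $x_n^\pm$. These are the dynamics of the regularized system $\epsilon\dot v=-a\epsilon v-\sin(\pi x[1+\frac12\psi(v)])$ in the regions $v\ge1$ and $v\le-1$, where $\psi(v)=\pm1$. *)

theory Defs
  imports "HOL-Analysis.Analysis"
begin

definition omega_plus :: real where "omega_plus = 3/2"
definition omega_minus :: real where "omega_minus = 1/2"

definition xn_plus :: "nat \<Rightarrow> real" where "xn_plus n = 2 * real n / 3"
definition xn_minus :: "nat \<Rightarrow> real" where "xn_minus n = 2 * real n"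

definition xeps_plus :: "real \<Rightarrow> real \<Rightarrow> nat \<Rightarrow> real" where
  "xeps_plus a eps n = xn_plus n + (-1) ^ (n + 1) * arcsin (a * eps) / (pi * omega_plus)"
definition xeps_minus :: "real \<Rightarrow> real \<Rightarrow> nat \<Rightarrow> real" where
  "xeps_minus a eps n = xn_minus n - (-1) ^ (n + 1) * arcsin (a * eps) / (pi * omega_minus)"

definition is_sol :: "real \<Rightarrow> real \<Rightarrow> real \<Rightarrow> (real \<Rightarrow> real) \<Rightarrow> bool" where
  "is_sol a eps w v \<longleftrightarrow>
     (\<forall>x. (v has_real_derivative ((- a * eps * v x - sin (pi * w * x)) / eps)) (at x))"

definition next_hit :: "(real \<Rightarrow> real) \<Rightarrow> real \<Rightarrow> real \<Rightarrow> real \<Rightarrow> bool" where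
  "next_hit v s x0 x \<longleftrightarrow> x0 < x \<and> v x = s \<and> (\<forall>y. x0 < y \<and> y < x \<longrightarrow> v y \<noteq> s)"

end

theory Submission imports Defs begin

lemma sin_gt_lemma:
  fixes \<alpha> \<phi> :: real
  assumes "0 < \<alpha>" "\<alpha> < pi/2" "\<alpha> < \<phi>" "\<phi> < pi - \<alpha>"
  shows "sin \<phi> > sin \<alpha>"
proof -
  have "sin ((\<phi> - \<alpha>)/2) > 0" by (rule sin_gt_zero) (use assms in auto)
  moreover have "cos ((\<phi> + \<alpha>)/2) > 0" by (rule cos_gt_zero_pi) (use assms in auto)
  ultimately show ?thesis using sin_diff_sin[of \<phi> \<alpha>] by (smt (verit) mult_pos_pos)
qed

lemma sin_lt_lemma:
  fixes \<alpha> \<phi> :: real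
  assumes "0 < \<alpha>" "\<alpha> < pi/2" "pi - \<alpha> < \<phi>" "\<phi> < 2*pi + \<alpha>"
  shows "sin \<phi> < sin \<alpha>"
proof -
  have "sin ((\<phi> - \<alpha>)/2) > 0" by (rule sin_gt_zero) (use assms in auto)
  moreover have "cos ((\<phi> + \<alpha>)/2) < 0"
  proof -
    have "cos ((\<phi> + \<alpha>)/2 - pi) > 0" by (rule cos_gt_zero_pi) (use assms in \<open>auto simp: field_simps\<close>)
    thus ?thesis by simp
  qed
  ultimately show ?thesis using sin_diff_sin[of \<phi> \<alpha>]
    by (smt (verit) mult_pos_neg)
qed

lemma core:
  fixes a e c h \<alpha> :: real and u :: "real \<Rightarrow> real"
  assumes a: "a > 0" and e: "e > 0" and c: "c > 0" and al: "0 < \<alpha>" "\<alpha> < pi/2"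
    and k: "a * e = sin \<alpha>"
    and du: "\<forall>x. (u has_real_derivative ((- a * e * u x + sin (c*(x-h)) - a*e)/e)) (at x)"
    and u0: "u (h + \<alpha>/c) = 0"
  shows "\<exists>x. h+\<alpha>/c < x \<and> u x = 0 \<and> (\<forall>y. h+\<alpha>/c < y \<and> y < x \<longrightarrow> u y \<noteq> 0)
          \<and> h+(pi-\<alpha>)/c < x \<and> x < h+(2*pi+\<alpha>)/c"
proof -
  define k where "k = a * e"
  define x0 where "x0 = h+\<alpha>/c"
  define x1 where "x1 = h+(pi-\<alpha>)/c"
  define x2 where "x2 = h+(2*pi+\<alpha>)/c"
  define H where "H x = exp (a*x) * u x" for x
  define G where "G x = exp(a*x) * ((a * sin(c*(x-h)) - c * cos(c*(x-h)))/(a\<^sup>2+c\<^sup>2) - k/a)/e" for x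
  have dH: "(H has_real_derivative (exp (a*x) * (sin (c*(x-h)) - k)/e)) (at x)" for x
  proof -
    have "(H has_real_derivative (exp (a*x) * a * u x + exp (a*x) * ((- a * e * u x + sin (c*(x-h)) - a*e)/e))) (at x)"
      unfolding H_def
      by (auto intro!: derivative_eq_intros du[rule_format])
    moreover have "exp (a*x) * a * u x + exp (a*x) * ((- a * e * u x + sin (c*(x-h)) - a*e)/e)
        = exp (a*x) * (sin (c*(x-h)) - k)/e"
      using e by (simp add: k_def field_simps)
    ultimately show ?thesis by simp
  qed
  have D: "a\<^sup>2+c\<^sup>2 > 0" using a by (simp add: add_pos_nonneg)
  define P where "P = a/((a\<^sup>2+c\<^sup>2)*e)"
  define Q where "Q = c/((a\<^sup>2+c\<^sup>2)*e)"
  define R where "R = k/(a*e)"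
  have Geq: "G x = exp(a*x) * (P * sin(c*(x-h)) - Q * cos(c*(x-h)) - R)" for x
  proof -
    have "((a * sin(c*(x-h)) - c * cos(c*(x-h)))/(a\<^sup>2+c\<^sup>2) - k/a)/e = P * sin(c*(x-h)) - Q * cos(c*(x-h)) - R"
      unfolding P_def Q_def R_def by (simp add: diff_divide_distrib)
    thus ?thesis unfolding G_def by (metis times_divide_eq_right)
  qed
  have dG: "(G has_real_derivative (exp (a*x) * (sin (c*(x-h)) - k)/e)) (at x)" for x
  proof -
    have "((\<lambda>x. exp(a*x) * (P * sin(c*(x-h)) - Q * cos(c*(x-h)) - R)) has_real_derivative
      exp(a*x) * a * (P * sin(c*(x-h)) - Q * cos(c*(x-h)) - R) + exp(a*x) * (P * (cos(c*(x-h)) * c) + Q * (sin(c*(x-h))*c))) (at x)"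
      apply (rule derivative_eq_intros refl)+
      apply (simp add: algebra_simps)
      done
    moreover have "exp(a*x) * a * (P * sin(c*(x-h)) - Q * cos(c*(x-h)) - R) + exp(a*x) * (P * (cos(c*(x-h)) * c) + Q * (sin(c*(x-h))*c))
       = exp (a*x) * (sin (c*(x-h)) - k)/e"
    proof -
      have "a * P + Q * c = (a*a + c*c)/((a\<^sup>2+c\<^sup>2)*e)" unfolding P_def Q_def
        by (simp add: add_divide_distrib)
      also have "\<dots> = (a\<^sup>2+c\<^sup>2)/((a\<^sup>2+c\<^sup>2)*e)" by (simp add: power2_eq_square)
      also have "\<dots> = 1/e" using D a by simp
      finally have "a * P + Q * c = 1/e" .
      moreover have "P * c - a * Q = 0" unfolding P_def Q_def by simp
      moreover have "a * R = k/e" unfolding R_def using a e by simp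
      ultimately have "sin(c*(x-h))*(a*P+Q*c) + cos(c*(x-h))*(P*c - a*Q) - a*R = (sin (c*(x-h)) - k)/e"
        by (simp add: diff_divide_distrib)
      moreover have "exp(a*x) * a * (P * sin(c*(x-h)) - Q * cos(c*(x-h)) - R) + exp(a*x) * (P * (cos(c*(x-h)) * c) + Q * (sin(c*(x-h))*c))
        = exp(a*x) * (sin(c*(x-h))*(a*P+Q*c) + cos(c*(x-h))*(P*c - a*Q) - a*R)"
        by (simp add: algebra_simps)
      ultimately show ?thesis by simp
    qed
    moreover have GG: "G = (\<lambda>x. exp(a*x) * (P * sin(c*(x-h)) - Q * cos(c*(x-h)) - R))"
      by (rule ext) (rule Geq)
    ultimately show ?thesis by (simp only: GG)
  qed
  have HG: "H x = G x - G x0" for x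
  proof -
    have "\<forall>x. ((\<lambda>x. H x - G x) has_real_derivative 0) (at x)"
      using dH dG by (metis (no_types) DERIV_diff diff_self)
    hence "H x - G x = H x0 - G x0" by (rule DERIV_isconst_all)
    moreover have "H x0 = 0" using u0 by (simp add: H_def x0_def)
    ultimately show ?thesis by simp
  qed
  have cpos: "cos \<alpha> > 0" using al by (intro cos_gt_zero_pi) auto
  have x01: "x0 < x1" and x12: "x1 < x2" using al c by (auto simp: x0_def x1_def x2_def divide_strict_right_mono)
  have sx2: "sin (c*(x2-h)) = sin \<alpha>" "cos (c*(x2-h)) = cos \<alpha>"
    and sx0: "sin (c*(x0-h)) = sin \<alpha>" "cos (c*(x0-h)) = cos \<alpha>"
    using c by (auto simp: x2_def x0_def sin_add cos_add)
  have "H x2 < 0"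
  proof -
    have ex: "exp (a*x0) < exp (a*x2)" using x01 x12 a by simp
    have "a\<^sup>2+c\<^sup>2 > a\<^sup>2" using c by simp
    have kpos: "k > 0" using k_def a e by simp
    have "a/(a\<^sup>2+c\<^sup>2) < 1/a" using a c D by (simp add: divide_simps power2_eq_square)
    hence "k*(a/(a\<^sup>2+c\<^sup>2)) < k*(1/a)" using kpos by (rule mult_strict_left_mono)
    hence "a*k/(a\<^sup>2+c\<^sup>2) < k/a" by (simp add: mult.commute)
    moreover have "c * cos \<alpha> / (a\<^sup>2+c\<^sup>2) > 0" using cpos c a by (simp add: add_pos_nonneg)
    ultimately have B: "(a * sin \<alpha> - c * cos \<alpha>)/(a\<^sup>2+c\<^sup>2) - k/a < 0"
      using k k_def by (simp add: diff_divide_distrib)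
    have "H x2 = (exp (a*x2) - exp (a*x0)) * (P * sin \<alpha> - Q * cos \<alpha> - R)"
      unfolding HG Geq sx2 sx0 by (simp add: algebra_simps)
    also have "P * sin \<alpha> - Q * cos \<alpha> - R = ((a * sin \<alpha> - c * cos \<alpha>)/(a\<^sup>2+c\<^sup>2) - k/a) / e"
      unfolding P_def Q_def R_def by (simp add: diff_divide_distrib)
    also have "(exp (a*x2) - exp (a*x0)) * (((a * sin \<alpha> - c * cos \<alpha>)/(a\<^sup>2+c\<^sup>2) - k/a) / e) < 0"
      using ex B e by (intro mult_pos_neg divide_neg_pos) auto
    finally show ?thesis .
  qed
  have contH: "continuous_on S H" for S
    using dH by (meson DERIV_continuous continuous_at_imp_continuous_on)
  have Hpos: "H y > 0" if "x0 < y" "y \<le> x1" for y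
  proof -
    have "H x0 < H y"
    proof (rule DERIV_pos_imp_increasing_open[OF that(1) _ contH])
      fix x assume "x0 < x" "x < y"
      hence "c*x0 < c*x" "c*x < c*y" "c*y \<le> c*x1" using that c by simp_all
      moreover have "c*x0 = c*h + \<alpha>" "c*x1 = c*h + pi - \<alpha>" using c by (simp_all add: x0_def x1_def field_simps)
      ultimately have "\<alpha> < c*(x-h)" "c*(x-h) < pi - \<alpha>" by (simp_all add: right_diff_distrib)
      hence "sin (c*(x-h)) > k" using sin_gt_lemma al k k_def by auto
      thus "\<exists>y. DERIV H x :> y \<and> y > 0" using dH[of x] e
        by (intro exI[of _ "exp (a*x) * (sin (c*(x-h)) - k)/e"] conjI) auto
    qed
    thus ?thesis using HG by simp
  qed
  have Hdec: "H y > H z" if "x1 \<le> y" "y < z" "z \<le> x2" for y z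
  proof (rule DERIV_neg_imp_decreasing_open[OF that(2) _ contH])
    fix x assume "y < x" "x < z"
    hence "c*y < c*x" "c*x < c*z" "c*x1 \<le> c*y" "c*z \<le> c*x2" using that c by simp_all
    moreover have "c*x2 = c*h + 2*pi + \<alpha>" "c*x1 = c*h + pi - \<alpha>" using c by (simp_all add: x2_def x1_def field_simps)
    ultimately have "pi - \<alpha> < c*(x-h)" "c*(x-h) < 2*pi + \<alpha>" by (simp_all add: right_diff_distrib)
    hence "sin (c*(x-h)) < k" using sin_lt_lemma al k k_def by auto
    thus "\<exists>y. DERIV H x :> y \<and> y < 0" using dH[of x] e
      by (intro exI[of _ "exp (a*x) * (sin (c*(x-h)) - k)/e"] conjI) (auto simp: mult_pos_neg divide_neg_pos)
  qed
  have "H x1 > 0" using Hpos x01 by simp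
  obtain x where x: "x1 \<le> x" "x \<le> x2" "H x = 0"
    using IVT2'[of H x2 0 x1, OF _ _ _ contH] \<open>H x2 < 0\<close> \<open>H x1 > 0\<close> x12 by auto
  have xne: "x \<noteq> x1" "x \<noteq> x2" using x \<open>H x2 < 0\<close> \<open>H x1 > 0\<close> by auto
  have Hu: "u y = 0 \<longleftrightarrow> H y = 0" for y by (simp add: H_def)
  show ?thesis
  proof (intro exI conjI allI impI)
    show "h + \<alpha>/c < x" using x x01 unfolding x0_def by simp
    show "u x = 0" using x Hu by simp
    show "h+(pi-\<alpha>)/c < x" using x xne unfolding x1_def by simp
    show "x < h+(2*pi+\<alpha>)/c" using x xne unfolding x2_def by simp
  next
    fix y assume y: "h + \<alpha>/c < y \<and> y < x"
    show "u y \<noteq> 0"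
    proof (cases "y \<le> x1")
      case True thus ?thesis using Hpos[of y] y Hu unfolding x0_def by force
    next
      case False thus ?thesis using Hdec[of y x] y x Hu by force
    qed
  qed
qed

lemma sin_shift: "sin (y + real m * pi) = (-1)^m * sin y"
  by (simp add: sin_add)

lemma plus_case:
  fixes a eps :: real and n :: nat and v :: "real \<Rightarrow> real"
  assumes a: "a > 0" and e: "eps > 0" and ae: "a * eps < 1"
    and sol: "is_sol a eps omega_plus v" and v0: "v (xeps_plus a eps (2*n+1)) = 1"
  shows "\<exists>x. next_hit v 1 (xeps_plus a eps (2*n+1)) x \<and> x \<in> {xeps_plus a eps (2*n+2)<..<xeps_plus a eps (2*n+3)}"
proof -
  define \<alpha> where "\<alpha> = arcsin (a*eps)"
  have aepos: "a*eps > 0" using a e by simp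
  have al: "0 < \<alpha>" "\<alpha> < pi/2" using arcsin_lt_bounded[of "a*eps"] arcsin_less_mono[of 0 "a*eps"] ae aepos
    by (auto simp: \<alpha>_def)
  have sa: "a * eps = sin \<alpha>" using ae aepos by (simp add: \<alpha>_def)
    define c where "c = 3*pi/2"
    define h where "h = 2*(2*real n+1)/3"
    have c: "c > 0" by (simp add: c_def)
    have ch: "c*(x-h) + real (2*n+1) * pi = pi * omega_plus * x" for x
      by (simp add: c_def h_def omega_plus_def algebra_simps)
    have x0: "xeps_plus a eps (2*n+1) = h + \<alpha>/c"
      by (simp add: xeps_plus_def xn_plus_def h_def c_def omega_plus_def \<alpha>_def field_simps)
    have x1: "xeps_plus a eps (2*n+2) = h + (pi-\<alpha>)/c"
      by (simp add: xeps_plus_def xn_plus_def h_def c_def omega_plus_def \<alpha>_def field_simps)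
    have x2: "xeps_plus a eps (2*n+3) = h + (2*pi+\<alpha>)/c"
      by (simp add: xeps_plus_def xn_plus_def h_def c_def omega_plus_def \<alpha>_def field_simps)
    define u where "u x = v x - 1" for x
    have du: "\<forall>x. (u has_real_derivative ((- a * eps * u x + sin (c*(x-h)) - a*eps)/eps)) (at x)"
    proof
      fix x
      have "(u has_real_derivative ((- a * eps * v x - sin (pi * omega_plus * x)) / eps)) (at x)"
        using sol unfolding is_sol_def u_def by (auto intro!: derivative_eq_intros)
      moreover have "sin (pi * omega_plus * x) = - sin (c*(x-h))"
        using sin_shift[of "c*(x-h)" "2*n+1"] ch[of x] by simp
      ultimately show "(u has_real_derivative ((- a * eps * u x + sin (c*(x-h)) - a*eps)/eps)) (at x)"
        by (simp add: u_def algebra_simps)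
    qed
    have u0: "u (h + \<alpha>/c) = 0" using v0 x0 by (simp add: u_def)
    from core[OF a e c al sa du u0] obtain x where
      "h+\<alpha>/c < x" "u x = 0" "\<forall>y. h+\<alpha>/c < y \<and> y < x \<longrightarrow> u y \<noteq> 0"
      "h+(pi-\<alpha>)/c < x" "x < h+(2*pi+\<alpha>)/c" by blast
    then have "next_hit v 1 (xeps_plus a eps (2*n+1)) x \<and>
                x \<in> {xeps_plus a eps (2*n+2)<..<xeps_plus a eps (2*n+3)}"
      unfolding next_hit_def x0 x1 x2 u_def by auto
    thus "\<exists>x. next_hit v 1 (xeps_plus a eps (2*n+1)) x \<and>
                x \<in> {xeps_plus a eps (2*n+2)<..<xeps_plus a eps (2*n+3)}" by blast
qed

lemma minus_case:
  fixes a eps :: real and n :: nat and v :: "real \<Rightarrow> real"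
  assumes a: "a > 0" and e: "eps > 0" and ae: "a * eps < 1"
    and sol: "is_sol a eps omega_minus v" and v0: "v (xeps_minus a eps (2*n)) = -1"
  shows "\<exists>x. next_hit v (-1) (xeps_minus a eps (2*n)) x \<and> x \<in> {xeps_minus a eps (2*n+1)<..<xeps_minus a eps (2*n+2)}"
proof -
  define \<alpha> where "\<alpha> = arcsin (a*eps)"
  have aepos: "a*eps > 0" using a e by simp
  have al: "0 < \<alpha>" "\<alpha> < pi/2" using arcsin_lt_bounded[of "a*eps"] arcsin_less_mono[of 0 "a*eps"] ae aepos
    by (auto simp: \<alpha>_def)
  have sa: "a * eps = sin \<alpha>" using ae aepos by (simp add: \<alpha>_def)
    define c where "c = pi/2"
    define h where "h = 4*real n"
    have c: "c > 0" by (simp add: c_def)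
    have ch: "c*(x-h) + real (2*n) * pi = pi * omega_minus * x" for x
      by (simp add: c_def h_def omega_minus_def algebra_simps)
    have x0: "xeps_minus a eps (2*n) = h + \<alpha>/c"
      by (simp add: xeps_minus_def xn_minus_def h_def c_def omega_minus_def \<alpha>_def field_simps)
    have x1: "xeps_minus a eps (2*n+1) = h + (pi-\<alpha>)/c"
      by (simp add: xeps_minus_def xn_minus_def h_def c_def omega_minus_def \<alpha>_def field_simps)
    have x2: "xeps_minus a eps (2*n+2) = h + (2*pi+\<alpha>)/c"
      by (simp add: xeps_minus_def xn_minus_def h_def c_def omega_minus_def \<alpha>_def field_simps)
    define u where "u x = - v x - 1" for x
    have du: "\<forall>x. (u has_real_derivative ((- a * eps * u x + sin (c*(x-h)) - a*eps)/eps)) (at x)"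
    proof
      fix x
      have "(u has_real_derivative (- ((- a * eps * v x - sin (pi * omega_minus * x)) / eps))) (at x)"
        using sol unfolding is_sol_def u_def by (auto intro!: derivative_eq_intros)
      moreover have "sin (pi * omega_minus * x) = sin (c*(x-h))"
        using sin_shift[of "c*(x-h)" "2*n"] ch[of x] by simp
      ultimately show "(u has_real_derivative ((- a * eps * u x + sin (c*(x-h)) - a*eps)/eps)) (at x)"
        by (simp add: u_def algebra_simps diff_divide_distrib add_divide_distrib)
    qed
    have u0: "u (h + \<alpha>/c) = 0" using v0 x0 by (simp add: u_def)
    from core[OF a e c al sa du u0] obtain x where
      "h+\<alpha>/c < x" "u x = 0" "\<forall>y. h+\<alpha>/c < y \<and> y < x \<longrightarrow> u y \<noteq> 0"
      "h+(pi-\<alpha>)/c < x" "x < h+(2*pi+\<alpha>)/c" by blast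
    then have "next_hit v (-1) (xeps_minus a eps (2*n)) x \<and>
                x \<in> {xeps_minus a eps (2*n+1)<..<xeps_minus a eps (2*n+2)}"
      unfolding next_hit_def x0 x1 x2 u_def by auto
    thus "\<exists>x. next_hit v (-1) (xeps_minus a eps (2*n)) x \<and>
                x \<in> {xeps_minus a eps (2*n+1)<..<xeps_minus a eps (2*n+2)}" by blast
qed

theorem lemma8:
  shows "\<exists>\<delta>>0. \<delta> \<le> 1 \<and>
    (\<forall>a eps. a > 0 \<longrightarrow> eps > 0 \<longrightarrow> a * eps < \<delta> \<longrightarrow>
      (\<forall>n::nat.
        (\<forall>v. is_sol a eps omega_plus v \<longrightarrow> v (xeps_plus a eps (2*n+1)) = 1 \<longrightarrow>
           (\<exists>x. next_hit v 1 (xeps_plus a eps (2*n+1)) x \<and>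
                x \<in> {xeps_plus a eps (2*n+2)<..<xeps_plus a eps (2*n+3)})) \<and>
        (\<forall>v. is_sol a eps omega_minus v \<longrightarrow> v (xeps_minus a eps (2*n)) = -1 \<longrightarrow>
           (\<exists>x. next_hit v (-1) (xeps_minus a eps (2*n)) x \<and>
                x \<in> {xeps_minus a eps (2*n+1)<..<xeps_minus a eps (2*n+2)}))))"
  apply (rule exI[of _ 1], intro conjI allI impI)
     apply simp
    apply simp
   apply (rule plus_case; assumption)
  apply (rule minus_case; assumption)
  done
end
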